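(* Let $n\ge1$, $0\le c_0<c_1<\dots<c_n$, $v_0\ge v_1\ge\dots\ge v_n>0$, $0\le\rho_k<\frac{v_k}{2}$ ($k=0,\dots,n$), and let $B=(b_{jk})_{j,k=0}^n$ with $b_{jk}=v_k-c_k$ if $j>k$, $b_{kk}=\frac{v_k}{2}-c_k-\rho_k$, $b_{jk}=-c_j$ if $j<k$. Let $\mathbf{p}$ be the ESS for $B$. If $j<n$ and $c_j\ge c_n+\rho_n-\frac12v_n$, then $p_j=0$.
   Context: Strategies are indexed $0,\dots,n$, $\overline\Delta=\{\mathbf{q}\in[0,1]^{n+1}:\sum q_j=1\}$. $\mathbf{p}\in\overline\Delta$ is an ESS for $B$ if (i) $\mathbf{p}^TB\mathbf{p}\ge\mathbf{q}^TB\mathbf{p}$ for all $\mathbf{q}\in\overline\Delta$ and (ii) whenever $\mathbf{q}\ne\mathbf{p}$ and $\mathbf{p}^TB\mathbf{p}=\mathbf{q}^TB\mathbf{p}$, then $\mathbf{p}^TB\mathbf{q}>\mathbf{q}^TB\mathbf{q}$. For such $B$ an ESS exists and is unique. *)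

theory Defs
  imports Main "HOL-Analysis.Analysis"
begin

definition strat_simplex :: "nat \<Rightarrow> (nat \<Rightarrow> real) set" where
  "strat_simplex n = {q. (\<forall>i\<le>n. 0 \<le> q i \<and> q i \<le> 1) \<and> (\<forall>i>n. q i = 0)
                   \<and> (\<Sum>i\<le>n. q i) = 1}"

definition bform :: "nat \<Rightarrow> (nat \<Rightarrow> nat \<Rightarrow> real) \<Rightarrow> (nat \<Rightarrow> real) \<Rightarrow> (nat \<Rightarrow> real) \<Rightarrow> real" where
  "bform n B x y = (\<Sum>j\<le>n. \<Sum>k\<le>n. x j * B j k * y k)"

definition is_ESS :: "nat \<Rightarrow> (nat \<Rightarrow> nat \<Rightarrow> real) \<Rightarrow> (nat \<Rightarrow> real) \<Rightarrow> bool" where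
  "is_ESS n B p \<longleftrightarrow> p \<in> strat_simplex n
     \<and> (\<forall>q\<in>strat_simplex n. bform n B p p \<ge> bform n B q p)
     \<and> (\<forall>q\<in>strat_simplex n. q \<noteq> p \<and> bform n B p p = bform n B q p
           \<longrightarrow> bform n B p q > bform n B q q)"

definition payoff_matrix :: "(nat \<Rightarrow> real) \<Rightarrow> (nat \<Rightarrow> real) \<Rightarrow> (nat \<Rightarrow> real) \<Rightarrow> nat \<Rightarrow> nat \<Rightarrow> real" where
  "payoff_matrix c v \<rho> j k =
     (if j > k then v k - c k
      else if j = k then v k / 2 - c k - \<rho> k
      else - c j)"

end

theory Submission
  imports Defs
begin

lemma mono_c_aux:
  fixes c :: "nat \<Rightarrow> real"
  assumes "\<forall>k<n. c k < c (Suc k)" "j \<le> m" "m \<le> n"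
  shows "c j \<le> c m"
  using assms(2,3)
proof (induction m)
  case 0 then show ?case by simp
next
  case (Suc m)
  show ?case
  proof (cases "j = Suc m")
    case True then show ?thesis by simp
  next
    case False
    then have "j \<le> m" using Suc.prems by simp
    then have "c j \<le> c m" using Suc by simp
    moreover have "c m < c (Suc m)" using assms(1) Suc.prems by simp
    ultimately show ?thesis by simp
  qed
qed

theorem lemma5p2:
  fixes n j :: nat and c v \<rho> p :: "nat \<Rightarrow> real"
  assumes "n \<ge> 1"
    and "0 \<le> c 0"
    and "\<forall>k<n. c k < c (Suc k)"
    and "\<forall>k<n. v k \<ge> v (Suc k)"
    and "v n > 0"
    and "\<forall>k\<le>n. 0 \<le> \<rho> k \<and> \<rho> k < v k / 2"
    and "is_ESS n (payoff_matrix c v \<rho>) p"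
    and "j < n"
    and "c j \<ge> c n + \<rho> n - v n / 2"
  shows "p j = 0"
proof (rule ccontr)
  assume pj: "p j \<noteq> 0"
  let ?B = "payoff_matrix c v \<rho>"
  define E where "E i = (\<Sum>k\<le>n. ?B i k * p k)" for i
  have ps: "p \<in> strat_simplex n" and nash: "\<forall>q\<in>strat_simplex n. bform n ?B p p \<ge> bform n ?B q p"
    using assms(7) unfolding is_ESS_def by auto
  have pnn: "\<And>i. i \<le> n \<Longrightarrow> 0 \<le> p i" and psum: "(\<Sum>i\<le>n. p i) = 1"
    using ps unfolding strat_simplex_def by auto
  have bq: "bform n ?B q p = (\<Sum>i\<le>n. q i * E i)" for q
    unfolding bform_def E_def by (simp add: sum_distrib_left mult.assoc)
  have Ele: "E i \<le> bform n ?B p p" if "i \<le> n" for i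
  proof -
    let ?q = "\<lambda>x. if x = i then 1 else (0::real)"
    have "?q \<in> strat_simplex n" using that unfolding strat_simplex_def by auto
    then have le: "bform n ?B ?q p \<le> bform n ?B p p" using nash by blast
    have "(\<Sum>x\<le>n. ?q x * E x) = (\<Sum>x\<le>n. if x = i then E x else 0)"
      by (rule sum.cong) auto
    also have "\<dots> = E i" using that by (simp add: sum.delta)
    finally have "bform n ?B ?q p = E i" unfolding bq .
    then show ?thesis using le by simp
  qed
  have Eeq: "E i = bform n ?B p p" if "i \<le> n" "p i > 0" for i
  proof (rule ccontr)
    assume "E i \<noteq> bform n ?B p p"
    then have lt: "E i < bform n ?B p p" using Ele that by force
    have "(\<Sum>k\<le>n. p k * E k) < (\<Sum>k\<le>n. p k * bform n ?B p p)"
    proof (rule sum_strict_mono_ex1)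
      show "\<forall>x\<in>{..n}. p x * E x \<le> p x * bform n ?B p p"
        using Ele pnn by (simp add: mult_left_mono)
      show "\<exists>a\<in>{..n}. p a * E a < p a * bform n ?B p p"
        using that lt by (intro bexI[of _ i]) auto
    qed simp
    also have "\<dots> = bform n ?B p p" by (simp add: sum_distrib_right[symmetric] psum)
    finally show False using bq[of p] by simp
  qed
  define S where "S = {i. j \<le> i \<and> i < n \<and> p i > 0}"
  have "j \<in> S" using pj pnn assms(8) unfolding S_def by (simp add: order_less_le)
  have fS: "finite S" unfolding S_def by auto
  define m where "m = Max S"
  have mS: "m \<in> S" using fS \<open>j \<in> S\<close> unfolding m_def by (intro Max_in) auto
  have mmax: "\<And>i. i \<in> S \<Longrightarrow> i \<le> m" using fS unfolding m_def by simp
  have jm: "j \<le> m" and mn: "m < n" and pm: "p m > 0" using mS unfolding S_def by auto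
  have zero: "p i = 0" if "m < i" "i < n" for i
  proof -
    have "i \<notin> S" using mmax that by force
    moreover have "0 \<le> p i" using pnn that by simp
    ultimately show ?thesis using that jm unfolding S_def by auto
  qed
  have cjm: "c j \<le> c m" using mono_c_aux[OF assms(3) jm] mn by simp
  define d where "d k = (?B n k - ?B m k) * p k" for k
  have rm: "0 \<le> \<rho> m" "\<rho> m < v m / 2" using assms(6) mn by auto
  have dnn: "0 \<le> d k" if "k \<le> n" for k
  proof -
    have "k < m \<or> k = m \<or> (m < k \<and> k < n) \<or> k = n" using that by linarith
    then consider "k < m" | "k = m" | "m < k \<and> k < n" | "k = n" by blast
    then show ?thesis
    proof cases
      case 1 then show ?thesis using mn unfolding d_def payoff_matrix_def by simp
    next
      case 2 then show ?thesis using mn rm pm unfolding d_def payoff_matrix_def by simp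
    next
      case 3 then show ?thesis using zero unfolding d_def by simp
    next
      case 4 then show ?thesis using mn cjm assms(9) pnn[of n]
        unfolding d_def payoff_matrix_def by simp
    qed
  qed
  have dm: "d m > 0" using mn rm pm unfolding d_def payoff_matrix_def by simp
  have "d m \<le> (\<Sum>k\<le>n. d k)" using dnn mn by (intro member_le_sum) auto
  also have "\<dots> = E n - E m" unfolding d_def E_def by (simp add: sum_subtractf left_diff_distrib)
  finally have "E m < E n" using dm by simp
  moreover have "E m = bform n ?B p p" using Eeq mn pm by simp
  moreover have "E n \<le> bform n ?B p p" using Ele by simp
  ultimately show False by simp
qed

end
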